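(* Let $k\ge1$ and let $x=(X_1,\dots,X_k)$, $y=(Y_1,\dots,Y_k)$ be elements of $\mathrm M_2(\mathbb Z)^k$ such that every entry of every $X_i$ and $Y_i$ lies in $\{0,1\}$. If the reductions of $x,y$ modulo $2$ generate $\mathrm M_2(\mathbb F_2)^k$ as an $\mathbb F_2$-algebra, then $x,y$ generate $\mathrm M_2(\mathbb Z)^k$ as a ring. In particular, the ring $\mathrm M_2(\mathbb Z)^{16}$ can be generated by $2$ elements.
   Context: Generation is as unital associative algebra (ring): the non-commutative monomials in the generators (including $1$) span the algebra as a module over the base ring. *)

theory Defs
  imports "HOL-Analysis.Analysis" "HOL-Library.Z2"
begin

text \<open>An element of M_2(R)^k is represented as a function nat => R^2^2 of which only the
  entries at indices i < k matter.\<close>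

inductive_set tuple_alg_gen :: "(nat \<Rightarrow> 'a::comm_ring_1^2^2) set \<Rightarrow> (nat \<Rightarrow> 'a^2^2) set"
  for G where
  gen: "g \<in> G \<Longrightarrow> g \<in> tuple_alg_gen G"
| one: "(\<lambda>i. mat 1) \<in> tuple_alg_gen G"
| zero: "(\<lambda>i. 0) \<in> tuple_alg_gen G"
| add: "a \<in> tuple_alg_gen G \<Longrightarrow> b \<in> tuple_alg_gen G \<Longrightarrow> (\<lambda>i. a i + b i) \<in> tuple_alg_gen G"
| mult: "a \<in> tuple_alg_gen G \<Longrightarrow> b \<in> tuple_alg_gen G \<Longrightarrow> (\<lambda>i. a i ** b i) \<in> tuple_alg_gen G"
| smult: "a \<in> tuple_alg_gen G \<Longrightarrow> (\<lambda>i. mat c ** a i) \<in> tuple_alg_gen G"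

definition generates_M2_tuple :: "nat \<Rightarrow> (nat \<Rightarrow> 'a::comm_ring_1^2^2) set \<Rightarrow> bool" where
  "generates_M2_tuple k G \<longleftrightarrow>
     (\<forall>z :: nat \<Rightarrow> 'a^2^2. \<exists>w \<in> tuple_alg_gen G. \<forall>i<k. w i = z i)"

definition red2 :: "(nat \<Rightarrow> int^2^2) \<Rightarrow> (nat \<Rightarrow> bit^2^2)" where
  "red2 x = (\<lambda>i. \<chi> a b. of_int (x i $ a $ b))"

end

theory Submission
  imports Defs
begin

lemma mm2: "((A::'a::comm_ring_1^2^2) ** B) $ i $ j = A$i$1 * B$1$j + A$i$2 * B$2$j"
  by (simp add: matrix_matrix_mult_def sum_2)
lemma mat2: "(mat c :: 'a::zero^2^2) $ i $ j = (if i = j then c else 0)" by (simp add: mat_def)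
lemma meq2: "(A::'a^2^2) = B \<longleftrightarrow> A$1$1 = B$1$1 \<and> A$1$2 = B$1$2 \<and> A$2$1 = B$2$1 \<and> A$2$2 = B$2$2"
  by (simp add: vec_eq_iff forall_2)

lemmas ent = mm2 mat2

definition lc :: "int \<Rightarrow> int \<Rightarrow> int \<Rightarrow> int \<Rightarrow> int^2^2 \<Rightarrow> int^2^2 \<Rightarrow> int^2^2" where
 "lc c0 c1 c2 c3 X Y = mat c0 + mat c1 ** X + mat c2 ** Y + mat c3 ** (X ** Y)"

definition tr2 :: "int^2^2 \<Rightarrow> int" where "tr2 X = X$1$1 + X$2$2"
definition dt2 :: "int^2^2 \<Rightarrow> int" where "dt2 X = X$1$1*X$2$2 - X$1$2*X$2$1"

definition pe0 :: "int\<Rightarrow>int\<Rightarrow>int\<Rightarrow>int\<Rightarrow>int\<Rightarrow>int\<Rightarrow>int\<Rightarrow>int\<Rightarrow>int\<Rightarrow>int\<Rightarrow>int\<Rightarrow>int\<Rightarrow>int\<Rightarrow>int" where "pe0 tX dX tY dY tXY c0 c1 c2 c3 d0 d1 d2 d3 =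
  c0*d0 + c1*d1*(-dX) + c2*d1*(tXY - tX*tY) + c2*d2*(-dY) + c2*d3*(-tX*dY) + c3*d1*(-tY*dX) + c3*d3*(-dX*dY)"
definition pe1 :: "int\<Rightarrow>int\<Rightarrow>int\<Rightarrow>int\<Rightarrow>int\<Rightarrow>int\<Rightarrow>int\<Rightarrow>int\<Rightarrow>int\<Rightarrow>int\<Rightarrow>int\<Rightarrow>int\<Rightarrow>int\<Rightarrow>int" where "pe1 tX dX tY dY tXY c0 c1 c2 c3 d0 d1 d2 d3 =
  c0*d1 + c1*d0 + c1*d1*tX + c2*d1*tY + c2*d3*dY + c3*d1*tXY + c3*d2*(-dY)"
definition pe2 :: "int\<Rightarrow>int\<Rightarrow>int\<Rightarrow>int\<Rightarrow>int\<Rightarrow>int\<Rightarrow>int\<Rightarrow>int\<Rightarrow>int\<Rightarrow>int\<Rightarrow>int\<Rightarrow>int\<Rightarrow>int\<Rightarrow>int" where "pe2 tX dX tY dY tXY c0 c1 c2 c3 d0 d1 d2 d3 =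
  c0*d2 + c2*d0 + c1*d3*(-dX) + c2*d1*tX + c2*d2*tY + c2*d3*tXY + c3*d1*dX"
definition pe3 :: "int\<Rightarrow>int\<Rightarrow>int\<Rightarrow>int\<Rightarrow>int\<Rightarrow>int\<Rightarrow>int\<Rightarrow>int\<Rightarrow>int\<Rightarrow>int\<Rightarrow>int\<Rightarrow>int\<Rightarrow>int\<Rightarrow>int" where "pe3 tX dX tY dY tXY c0 c1 c2 c3 d0 d1 d2 d3 =
  c0*d3 + c3*d0 + c1*d2 + c1*d3*tX - c2*d1 + c3*d2*tY + c3*d3*tXY"

lemma lc_mult: "lc c0 c1 c2 c3 X Y ** lc d0 d1 d2 d3 X Y =
  lc (pe0 (tr2 X) (dt2 X) (tr2 Y) (dt2 Y) (tr2 (X**Y)) c0 c1 c2 c3 d0 d1 d2 d3)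
     (pe1 (tr2 X) (dt2 X) (tr2 Y) (dt2 Y) (tr2 (X**Y)) c0 c1 c2 c3 d0 d1 d2 d3)
     (pe2 (tr2 X) (dt2 X) (tr2 Y) (dt2 Y) (tr2 (X**Y)) c0 c1 c2 c3 d0 d1 d2 d3)
     (pe3 (tr2 X) (dt2 X) (tr2 Y) (dt2 Y) (tr2 (X**Y)) c0 c1 c2 c3 d0 d1 d2 d3) X Y"
  unfolding meq2 lc_def pe0_def pe1_def pe2_def pe3_def tr2_def dt2_def
  by (simp add: ent; algebra)

lemma mat_mul_neg: "mat (-1) ** (A::'a::comm_ring_1^2^2) = - A" by (simp add: meq2 ent)

lemma tg_neg: "a \<in> tuple_alg_gen G \<Longrightarrow> (\<lambda>i. - a i) \<in> tuple_alg_gen G"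
  using tuple_alg_gen.smult[of a G "-1"] by (simp add: mat_mul_neg)

lemma tg_diff: "a \<in> tuple_alg_gen G \<Longrightarrow> b \<in> tuple_alg_gen G \<Longrightarrow> (\<lambda>i. a i - b i) \<in> tuple_alg_gen G"
  using tuple_alg_gen.add[OF _ tg_neg, of a G b] by simp

lemma lc_in: "x \<in> G \<Longrightarrow> y \<in> G \<Longrightarrow> (\<lambda>i. lc c0 c1 c2 c3 (x i) (y i)) \<in> tuple_alg_gen G"
proof -
  assume x: "x \<in> G" and y: "y \<in> G"
  have h1: "(\<lambda>i. mat c0 ** mat 1) \<in> tuple_alg_gen G" by (rule tuple_alg_gen.smult[OF tuple_alg_gen.one])
  have h2: "(\<lambda>i. mat c1 ** x i) \<in> tuple_alg_gen G" by (rule tuple_alg_gen.smult[OF tuple_alg_gen.gen[OF x]])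
  have h3: "(\<lambda>i. mat c2 ** y i) \<in> tuple_alg_gen G" by (rule tuple_alg_gen.smult[OF tuple_alg_gen.gen[OF y]])
  have h4: "(\<lambda>i. mat c3 ** (x i ** y i)) \<in> tuple_alg_gen G"
    by (rule tuple_alg_gen.smult[OF tuple_alg_gen.mult[OF tuple_alg_gen.gen[OF x] tuple_alg_gen.gen[OF y]]])
  show ?thesis using tuple_alg_gen.add[OF tuple_alg_gen.add[OF tuple_alg_gen.add[OF h1 h2] h3] h4]
    by (simp add: lc_def)
qed

lemma lc_X: "lc 0 1 0 0 X Y = X" by (simp add: meq2 ent lc_def)
lemma lc_Y: "lc 0 0 1 0 X Y = Y" by (simp add: meq2 ent lc_def)
lemma lc_1: "lc 1 0 0 0 X Y = mat 1" by (simp add: meq2 ent lc_def)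
lemma lc_0: "lc 0 0 0 0 X Y = 0" by (simp add: meq2 ent lc_def)
lemma lc_add: "lc c0 c1 c2 c3 X Y + lc d0 d1 d2 d3 X Y = lc (c0+d0) (c1+d1) (c2+d2) (c3+d3) X Y"
  by (simp add: meq2 ent lc_def algebra_simps)
lemma lc_smult: "mat c ** lc d0 d1 d2 d3 X Y = lc (c*d0) (c*d1) (c*d2) (c*d3) X Y"
  by (simp add: meq2 ent lc_def algebra_simps)

lemma span2:
  assumes inv: "tr2 (x i) = tr2 (x j)" "dt2 (x i) = dt2 (x j)" "tr2 (y i) = tr2 (y j)"
    "dt2 (y i) = dt2 (y j)" "tr2 (x i ** y i) = tr2 (x j ** y j)"
  and a: "a \<in> tuple_alg_gen {x,y}"
  shows "\<exists>c0 c1 c2 c3. a i = lc c0 c1 c2 c3 (x i) (y i) \<and> a j = lc c0 c1 c2 c3 (x j) (y j)"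
  using a
proof induct
  case (gen g)
  then show ?case
  proof
    assume "g = x" then show ?thesis by (metis lc_X)
  next
    assume "g \<in> {y}" then show ?thesis by (metis lc_Y singletonD)
  qed
next
  case one then show ?case by (metis lc_1)
next
  case zero then show ?case by (metis lc_0)
next
  case (add a b) then show ?case by (metis lc_add)
next
  case (mult a b)
  then obtain c0 c1 c2 c3 d0 d1 d2 d3 where
    "a i = lc c0 c1 c2 c3 (x i) (y i)" "a j = lc c0 c1 c2 c3 (x j) (y j)"
    "b i = lc d0 d1 d2 d3 (x i) (y i)" "b j = lc d0 d1 d2 d3 (x j) (y j)" by blast
  then show ?case by (simp add: lc_mult inv) blast
next
  case (smult a c) then show ?case by (metis lc_smult)
qed

definition det3c :: "int \<Rightarrow> int \<Rightarrow> int \<Rightarrow> int \<Rightarrow> int \<Rightarrow> int \<Rightarrow> int \<Rightarrow> int \<Rightarrow> int \<Rightarrow> int" where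
 "det3c p1 p2 p3 q1 q2 q3 r1 r2 r3 = p1*(q2*r3 - q3*r2) - q1*(p2*r3 - p3*r2) + r1*(p2*q3 - p3*q2)"

lemma cram_gen:
 "det3c sa sb sc qa qb qc ra rb rc * pa + det3c pa pb pc sa sb sc ra rb rc * qa + det3c pa pb pc qa qb qc sa sb sc * ra = det3c pa pb pc qa qb qc ra rb rc * sa"
 "det3c sa sb sc qa qb qc ra rb rc * pb + det3c pa pb pc sa sb sc ra rb rc * qb + det3c pa pb pc qa qb qc sa sb sc * rb = det3c pa pb pc qa qb qc ra rb rc * sb"
 "det3c sa sb sc qa qb qc ra rb rc * pc + det3c pa pb pc sa sb sc ra rb rc * qc + det3c pa pb pc qa qb qc sa sb sc * rc = det3c pa pb pc qa qb qc ra rb rc * sc"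
  by (simp_all add: det3c_def algebra_simps)

lemma det3c_lin:
 "det3c (ka*pa+kb*qa+kc*ra) (ka*pb+kb*qb+kc*rb) (ka*pc+kb*qc+kc*rc) qa qb qc ra rb rc = ka * det3c pa pb pc qa qb qc ra rb rc"
 "det3c pa pb pc (ka*pa+kb*qa+kc*ra) (ka*pb+kb*qb+kc*rb) (ka*pc+kb*qc+kc*rc) ra rb rc = kb * det3c pa pb pc qa qb qc ra rb rc"
 "det3c pa pb pc qa qb qc (ka*pa+kb*qa+kc*ra) (ka*pb+kb*qb+kc*rb) (ka*pc+kb*qc+kc*rc) = kc * det3c pa pb pc qa qb qc ra rb rc"
  by (simp_all add: det3c_def algebra_simps)

lemma matscal: "(mat c ** (A::int^2^2))$i$j = c * A$i$j"
  using exhaust_2[of i] by (auto simp: mm2 mat2)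

lemma lc_ent: "(lc c0 c1 c2 c3 X Y)$i$j = (if i=j then c0 else 0) + c1*X$i$j + c2*Y$i$j + c3*(X**Y)$i$j"
  by (simp add: lc_def mat2 matscal)

definition vv1 :: "int^2^2 \<Rightarrow> int" where "vv1 u = u$1$1 - u$2$2"

definition D3 :: "int^2^2 \<Rightarrow> int^2^2 \<Rightarrow> int" where
 "D3 X Y = det3c (vv1 X) (X$1$2) (X$2$1) (vv1 Y) (Y$1$2) (Y$2$1) (vv1 (X**Y)) ((X**Y)$1$2) ((X**Y)$2$1)"

definition "cr1 X Y z = det3c (vv1 z) (z$1$2) (z$2$1) (vv1 Y) (Y$1$2) (Y$2$1) (vv1 (X**Y)) ((X**Y)$1$2) ((X**Y)$2$1)"
definition "cr2 X Y z = det3c (vv1 X) (X$1$2) (X$2$1) (vv1 z) (z$1$2) (z$2$1) (vv1 (X**Y)) ((X**Y)$1$2) ((X**Y)$2$1)"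
definition "cr3 X Y z = det3c (vv1 X) (X$1$2) (X$2$1) (vv1 Y) (Y$1$2) (Y$2$1) (vv1 z) (z$1$2) (z$2$1)"
definition "cr0 X Y z = D3 X Y * z$2$2 - cr1 X Y z * X$2$2 - cr2 X Y z * Y$2$2 - cr3 X Y z * (X**Y)$2$2"

lemma cramer: "lc (cr0 X Y z) (cr1 X Y z) (cr2 X Y z) (cr3 X Y z) X Y = mat (D3 X Y) ** z"
proof -
  note c = cram_gen[where sa="vv1 z" and sb="z$1$2" and sc="z$2$1" and qa="vv1 Y" and qb="Y$1$2" and qc="Y$2$1"
     and ra="vv1 (X**Y)" and rb="(X**Y)$1$2" and rc="(X**Y)$2$1" and pa="vv1 X" and pb="X$1$2" and pc="X$2$1"]
  have e1: "cr1 X Y z * vv1 X + cr2 X Y z * vv1 Y + cr3 X Y z * vv1 (X**Y) = D3 X Y * vv1 z"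
    using c(1) unfolding cr1_def cr2_def cr3_def D3_def by simp
  have e12: "cr1 X Y z * X$1$2 + cr2 X Y z * Y$1$2 + cr3 X Y z * (X**Y)$1$2 = D3 X Y * z$1$2"
    using c(2) unfolding cr1_def cr2_def cr3_def D3_def by simp
  have e21: "cr1 X Y z * X$2$1 + cr2 X Y z * Y$2$1 + cr3 X Y z * (X**Y)$2$1 = D3 X Y * z$2$1"
    using c(3) unfolding cr1_def cr2_def cr3_def D3_def by simp
  have e11: "cr0 X Y z + cr1 X Y z * X$1$1 + cr2 X Y z * Y$1$1 + cr3 X Y z * (X**Y)$1$1 = D3 X Y * z$1$1"
    using e1 unfolding vv1_def right_diff_distrib cr0_def by linarith
  show ?thesis unfolding meq2 lc_ent matscal
    using e11 e12 e21 by (simp add: cr0_def mult.commute)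
qed

lemma spanning:
  assumes "D3 X Y = 1 \<or> D3 X Y = -1"
  shows "\<exists>c0 c1 c2 c3. z = lc c0 c1 c2 c3 X Y"
proof -
  let ?s = "D3 X Y"
  have "lc (?s * cr0 X Y z) (?s * cr1 X Y z) (?s * cr2 X Y z) (?s * cr3 X Y z) X Y = mat ?s ** (mat ?s ** z)"
    by (simp add: lc_smult[symmetric] cramer)
  also have "\<dots> = z" using assms by (auto simp: meq2 matscal)
  finally show ?thesis by metis
qed

lemma det3c_even:
  "even pa \<Longrightarrow> even pb \<Longrightarrow> even pc \<Longrightarrow> even (det3c pa pb pc qa qb qc ra rb rc)"
  "even qa \<Longrightarrow> even qb \<Longrightarrow> even qc \<Longrightarrow> even (det3c pa pb pc qa qb qc ra rb rc)"
  "even ra \<Longrightarrow> even rb \<Longrightarrow> even rc \<Longrightarrow> even (det3c pa pb pc qa qb qc ra rb rc)"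
  by (auto simp: det3c_def)

lemma lc_v:
  "vv1 (lc c0 c1 c2 c3 X Y) = c1 * vv1 X + c2 * vv1 Y + c3 * vv1 (X**Y)"
  "(lc c0 c1 c2 c3 X Y)$1$2 = c1 * X$1$2 + c2 * Y$1$2 + c3 * (X**Y)$1$2"
  "(lc c0 c1 c2 c3 X Y)$2$1 = c1 * X$2$1 + c2 * Y$2$1 + c3 * (X**Y)$2$1"
  by (simp_all add: lc_ent vv1_def algebra_simps)

lemma indep_mod2:
  assumes D: "odd (D3 X Y)" and L: "L = lc c0 c1 c2 c3 X Y"
    and e: "even (L$1$1 - 1)" "even (L$1$2)" "even (L$2$1)" "even (L$2$2 - 1)"
  shows "odd c0 \<and> even c1 \<and> even c2 \<and> even c3"
proof -
  have "vv1 L = (L$1$1 - 1) - (L$2$2 - 1)" by (simp add: vv1_def)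
  hence v: "even (vv1 L)" using e by simp
  have "det3c (vv1 L) (L$1$2) (L$2$1) (vv1 Y) (Y$1$2) (Y$2$1) (vv1 (X**Y)) ((X**Y)$1$2) ((X**Y)$2$1) = c1 * D3 X Y"
    unfolding L lc_v D3_def det3c_lin ..
  moreover have "even (det3c (vv1 L) (L$1$2) (L$2$1) (vv1 Y) (Y$1$2) (Y$2$1) (vv1 (X**Y)) ((X**Y)$1$2) ((X**Y)$2$1))"
    using v e by (intro det3c_even(1))
  ultimately have c1: "even c1" using D by simp
  have "det3c (vv1 X) (X$1$2) (X$2$1) (vv1 L) (L$1$2) (L$2$1) (vv1 (X**Y)) ((X**Y)$1$2) ((X**Y)$2$1) = c2 * D3 X Y"
    unfolding L lc_v D3_def det3c_lin ..
  moreover have "even (det3c (vv1 X) (X$1$2) (X$2$1) (vv1 L) (L$1$2) (L$2$1) (vv1 (X**Y)) ((X**Y)$1$2) ((X**Y)$2$1))"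
    using v e by (intro det3c_even(2))
  ultimately have c2: "even c2" using D by simp
  have "det3c (vv1 X) (X$1$2) (X$2$1) (vv1 Y) (Y$1$2) (Y$2$1) (vv1 L) (L$1$2) (L$2$1) = c3 * D3 X Y"
    unfolding L lc_v D3_def det3c_lin ..
  moreover have "even (det3c (vv1 X) (X$1$2) (X$2$1) (vv1 Y) (Y$1$2) (Y$2$1) (vv1 L) (L$1$2) (L$2$1))"
    using v e by (intro det3c_even(3))
  ultimately have c3: "even c3" using D by simp
  have "L$2$2 = c0 + c1 * X$2$2 + c2 * Y$2$2 + c3 * (X**Y)$2$2" using L by (simp add: lc_ent)
  then show ?thesis using c1 c2 c3 e(4) by auto
qed

definition FF :: "int \<Rightarrow> int \<Rightarrow> int \<Rightarrow> int \<Rightarrow> int \<Rightarrow> int" where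
  "FF p q r s t = p*p * s + r*r*q + t*t - p*r*t - 4*q * s"

lemma D3_FF: "D3 X Y = FF (tr2 X) (dt2 X) (tr2 Y) (dt2 Y) (tr2 (X**Y))"
  unfolding D3_def FF_def det3c_def vv1_def tr2_def dt2_def mm2 by algebra

lemma FF_raw: "\<forall>p::int\<in>{0,1,2}. \<forall>q::int\<in>{-1,0,1}. \<forall>r::int\<in>{0,1,2}. \<forall>s::int\<in>{-1,0,1}.
   \<forall>t::int\<in>{0,1,2,3,4}. \<forall>t'::int\<in>{0,1,2,3,4}.
   (FF p q r s t = 1 \<or> FF p q r s t = -1) \<longrightarrow> (FF p q r s t' = 1 \<or> FF p q r s t' = -1) \<longrightarrow>
   t' - t \<noteq> 3 \<and> t' - t \<noteq> -3"
  by code_simp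

lemma bf_D_raw:
  "\<forall>a::int\<in>{0,1}. \<forall>b::int\<in>{0,1}. \<forall>c::int\<in>{0,1}. \<forall>d::int\<in>{0,1}. \<forall>e::int\<in>{0,1}. \<forall>f::int\<in>{0,1}. \<forall>g::int\<in>{0,1}. \<forall>h::int\<in>{0,1}.
   (odd (det3c (a-d) b c (e-h) f g ((a*e+b*g)-(c*f+d*h)) (a*f+b*h) (c*e+d*g)) \<longrightarrow>
      det3c (a-d) b c (e-h) f g ((a*e+b*g)-(c*f+d*h)) (a*f+b*h) (c*e+d*g) \<in> {1,-1}) \<and>
   (even (det3c (a-d) b c (e-h) f g ((a*e+b*g)-(c*f+d*h)) (a*f+b*h) (c*e+d*g)) \<longrightarrow>
    (\<exists>w\<in>{(1,0,0),(0,1,0),(0,0,1),(1,1,0),(1,0,1),(0,1,1),(1,1,1)}. case w of (wa::int,wb::int,wc::int) \<Rightarrow>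
      even (wa*(a-d)+wb*b+wc*c) \<and> even (wa*(e-h)+wb*f+wc*g) \<and> even (wa*((a*e+b*g)-(c*f+d*h)) + wb*(a*f+b*h) + wc*(c*e+d*g))))"
  by code_simp

definition zo :: "int^2^2 \<Rightarrow> bool" where "zo X \<longleftrightarrow> (\<forall>a b. X$a$b \<in> {0,1})"

lemma zo_ent: assumes "zo X" shows "X$1$1 \<in> {0,1}" "X$1$2 \<in> {0,1}" "X$2$1 \<in> {0,1}" "X$2$2 \<in> {0,1}"
  using assms by (simp_all add: zo_def)

lemma bf_D:
  assumes X: "zo X" and Y: "zo Y"
  shows "odd (D3 X Y) \<Longrightarrow> D3 X Y = 1 \<or> D3 X Y = -1"
  and "even (D3 X Y) \<Longrightarrow> \<exists>wa wb wc::int. (wa = 1 \<or> wb = 1 \<or> wc = 1) \<and>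
       even (wa * vv1 X + wb * X$1$2 + wc * X$2$1) \<and> even (wa * vv1 Y + wb * Y$1$2 + wc * Y$2$1) \<and>
       even (wa * vv1 (X**Y) + wb * (X**Y)$1$2 + wc * (X**Y)$2$1)"
proof -
  have r: "(odd (D3 X Y) \<longrightarrow> D3 X Y \<in> {1,-1}) \<and> (even (D3 X Y) \<longrightarrow>
    (\<exists>w\<in>{(1,0,0),(0,1,0),(0,0,1),(1,1,0),(1,0,1),(0,1,1),(1,1,1)}. case w of (wa::int,wb::int,wc::int) \<Rightarrow>
      even (wa * vv1 X + wb * X$1$2 + wc * X$2$1) \<and> even (wa * vv1 Y + wb * Y$1$2 + wc * Y$2$1) \<and>
      even (wa * vv1 (X**Y) + wb * (X**Y)$1$2 + wc * (X**Y)$2$1)))"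
    unfolding D3_def vv1_def mm2
    by (rule bf_D_raw[rule_format, OF zo_ent(1)[OF X] zo_ent(2)[OF X] zo_ent(3)[OF X] zo_ent(4)[OF X]
          zo_ent(1)[OF Y] zo_ent(2)[OF Y] zo_ent(3)[OF Y] zo_ent(4)[OF Y]])
  show "odd (D3 X Y) \<Longrightarrow> D3 X Y = 1 \<or> D3 X Y = -1" using r[THEN conjunct1] by auto
  assume "even (D3 X Y)"
  with r[THEN conjunct2] obtain w where w: "w \<in> {(1,0,0),(0,1,0),(0,0,1),(1,1,0),(1,0,1),(0,1,1),(1,1,1)}"
    "case w of (wa::int,wb::int,wc::int) \<Rightarrow>
      even (wa * vv1 X + wb * X$1$2 + wc * X$2$1) \<and> even (wa * vv1 Y + wb * Y$1$2 + wc * Y$2$1) \<and>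
      even (wa * vv1 (X**Y) + wb * (X**Y)$1$2 + wc * (X**Y)$2$1)" by (elim impE bexE) 
  obtain wa wb wc where ww: "w = (wa,wb,wc)" by (cases w)
  have 1: "wa = 1 \<or> wb = 1 \<or> wc = 1" using w(1) unfolding ww by auto
  have 2: "even (wa * vv1 X + wb * X$1$2 + wc * X$2$1) \<and> even (wa * vv1 Y + wb * Y$1$2 + wc * Y$2$1) \<and>
      even (wa * vv1 (X**Y) + wb * (X**Y)$1$2 + wc * (X**Y)$2$1)" using w(2) unfolding ww by (simp only: case_prod_conv)
  show "\<exists>wa wb wc::int. (wa = 1 \<or> wb = 1 \<or> wc = 1) \<and>
       even (wa * vv1 X + wb * X$1$2 + wc * X$2$1) \<and> even (wa * vv1 Y + wb * Y$1$2 + wc * Y$2$1) \<and>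
       even (wa * vv1 (X**Y) + wb * (X**Y)$1$2 + wc * (X**Y)$2$1)"
    using 1 2 by blast
qed


lemma rng_raw: "\<forall>a::int\<in>{0,1}. \<forall>b::int\<in>{0,1}. \<forall>c::int\<in>{0,1}. \<forall>d::int\<in>{0,1}.
   \<forall>e::int\<in>{0,1}. \<forall>f::int\<in>{0,1}. \<forall>g::int\<in>{0,1}. \<forall>h::int\<in>{0,1}.
   a + d \<in> {0,1,2} \<and> a*d - b*c \<in> {-1,0,1} \<and> (a*e+b*g)+(c*f+d*h) \<in> {0,1,2,3,4}"
  by code_simp

lemma rng:
  assumes X: "zo X" and Y: "zo Y"
  shows "tr2 X \<in> {0,1,2} \<and> dt2 X \<in> {-1,0,1} \<and> tr2 (X**Y) \<in> {0,1,2,3,4}"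
  unfolding tr2_def dt2_def mm2
  by (rule rng_raw[rule_format, OF zo_ent(1)[OF X] zo_ent(2)[OF X] zo_ent(3)[OF X] zo_ent(4)[OF X]
          zo_ent(1)[OF Y] zo_ent(2)[OF Y] zo_ent(3)[OF Y] zo_ent(4)[OF Y]])

definition r2 :: "int^2^2 \<Rightarrow> bit^2^2" where "r2 u = (\<chi> a b. of_int (u$a$b))"
lemma red2_r2: "red2 x i = r2 (x i)" by (simp add: red2_def r2_def)
lemma r2_ent: "r2 u $ a $ b = of_int (u$a$b)" by (simp add: r2_def)

lemma ofint_bit: "(of_int n :: bit) = (if even n then 0 else 1)"
proof (cases "even n")
  case True then obtain q where "n = 2*q" by (rule evenE)
  then show ?thesis using True by simp
next
  case False then obtain q where "n = 2*q+1" by (rule oddE)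
  then show ?thesis using False by simp
qed

lemma ofint_bit_eq: "((of_int m :: bit) = of_int n) \<longleftrightarrow> even (m - n)"
  by (auto simp add: ofint_bit)

lemma r2_add: "r2 (u+v) = r2 u + r2 v" by (simp add: meq2 r2_ent)
lemma r2_mult: "r2 (u ** v) = r2 u ** r2 v" by (simp add: meq2 mm2 r2_ent)
lemma r2_one: "r2 (mat 1) = mat 1" by (simp add: meq2 mat2 r2_ent)
lemma r2_zero: "r2 0 = 0" by (simp add: meq2 r2_ent)
lemma bmat0: "mat 0 ** (M::bit^2^2) = 0" by (simp add: meq2 mm2 mat2)

lemma lift:
  assumes "b \<in> tuple_alg_gen {red2 x, red2 y}"
  shows "\<exists>a\<in>tuple_alg_gen {x,y}. \<forall>i. b i = r2 (a i)"
  using assms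
proof induct
  case (gen g)
  then show ?case
  proof
    assume "g = red2 x" then show ?thesis by (intro bexI[of _ x]) (auto simp: red2_r2 intro: tuple_alg_gen.gen)
  next
    assume "g \<in> {red2 y}" then show ?thesis by (intro bexI[of _ y]) (auto simp: red2_r2 intro: tuple_alg_gen.gen)
  qed
next
  case one then show ?case by (intro bexI[of _ "\<lambda>i. mat 1"]) (auto simp: r2_one intro: tuple_alg_gen.one)
next
  case zero then show ?case by (intro bexI[of _ "\<lambda>i. 0"]) (auto simp: r2_zero intro: tuple_alg_gen.zero)
next
  case (add b b')
  then obtain a a' where "a \<in> tuple_alg_gen {x,y}" "\<forall>i. b i = r2 (a i)" "a' \<in> tuple_alg_gen {x,y}" "\<forall>i. b' i = r2 (a' i)" by blast
  then show ?case by (intro bexI[of _ "\<lambda>i. a i + a' i"]) (auto simp: r2_add intro: tuple_alg_gen.add)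
next
  case (mult b b')
  then obtain a a' where "a \<in> tuple_alg_gen {x,y}" "\<forall>i. b i = r2 (a i)" "a' \<in> tuple_alg_gen {x,y}" "\<forall>i. b' i = r2 (a' i)" by blast
  then show ?case by (intro bexI[of _ "\<lambda>i. a i ** a' i"]) (auto simp: r2_mult intro: tuple_alg_gen.mult)
next
  case (smult b c)
  then obtain a where a: "a \<in> tuple_alg_gen {x,y}" "\<forall>i. b i = r2 (a i)" by blast
  show ?case
  proof (cases "c = 0")
    case True then show ?thesis by (intro bexI[of _ "\<lambda>i. 0"]) (auto simp: r2_zero bmat0 intro: tuple_alg_gen.zero)
  next
    case False then have "c = 1" by simp
    then show ?thesis using a by (intro bexI[of _ a]) auto
  qed
qed

lemma gen_elem:
  assumes "generates_M2_tuple k {red2 x, red2 y}"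
  shows "\<exists>a\<in>tuple_alg_gen {x,y}. \<forall>i<k. r2 (a i) = z i"
proof -
  obtain w where w: "w \<in> tuple_alg_gen {red2 x, red2 y}" "\<forall>i<k. w i = z i"
    using assms unfolding generates_M2_tuple_def by blast
  obtain a where "a\<in>tuple_alg_gen {x,y}" "\<forall>i. w i = r2 (a i)" using lift[OF w(1)] by blast
  then show ?thesis using w(2) by metis
qed

lemma r2_eq_even: "r2 u = r2 v \<Longrightarrow> even (u$p$q - v$p$q)"
  by (metis r2_ent ofint_bit_eq)

lemma D3_unit:
  assumes g: "generates_M2_tuple k {red2 x, red2 y}" and i: "i < k" and X: "zo (x i)" and Y: "zo (y i)"
  shows "D3 (x i) (y i) = 1 \<or> D3 (x i) (y i) = -1"
proof (cases "odd (D3 (x i) (y i))")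
  case True then show ?thesis using bf_D(1)[OF X Y] by simp
next
  case False
  then obtain wa wb wc :: int where w: "wa = 1 \<or> wb = 1 \<or> wc = 1"
    "even (wa * vv1 (x i) + wb * (x i)$1$2 + wc * (x i)$2$1)"
    "even (wa * vv1 (y i) + wb * (y i)$1$2 + wc * (y i)$2$1)"
    "even (wa * vv1 (x i ** y i) + wb * (x i ** y i)$1$2 + wc * (x i ** y i)$2$1)"
    using bf_D(2)[OF X Y] by blast
  define phi :: "int^2^2 \<Rightarrow> int" where "phi u = wa * vv1 u + wb * u$1$2 + wc * u$2$1" for u
  define E :: "int^2^2" where "E = (if wa = 1 then (\<chi> p q. if p = 1 \<and> q = 1 then 1 else 0)
     else if wb = 1 then (\<chi> p q. if p = 1 \<and> q = 2 then 1 else 0) else (\<chi> p q. if p = 2 \<and> q = 1 then 1 else 0))"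
  have oE: "odd (phi E)" using w(1) by (auto simp: phi_def E_def vv1_def)
  obtain a where a: "a \<in> tuple_alg_gen {x,y}" "\<forall>l<k. r2 (a l) = r2 E" using gen_elem[OF g, of "\<lambda>l. r2 E"] by blast
  obtain c0 c1 c2 c3 where c: "a i = lc c0 c1 c2 c3 (x i) (y i)" using span2[where i=i and j=i, OF refl refl refl refl refl a(1)] by blast
  have "phi (a i) = c1 * phi (x i) + c2 * phi (y i) + c3 * phi (x i ** y i)"
    unfolding c phi_def lc_v by (simp add: algebra_simps)
  hence ea: "even (phi (a i))" using w(2-4) unfolding phi_def by simp
  have r: "r2 (a i) = r2 E" using a(2) i by simp
  have "phi (a i) - phi E = wa * (((a i)$1$1 - E$1$1) - ((a i)$2$2 - E$2$2)) + wb * ((a i)$1$2 - E$1$2) + wc * ((a i)$2$1 - E$2$1)"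
    unfolding phi_def vv1_def by (simp add: algebra_simps)
  moreover have "even (\<dots>)" using r2_eq_even[OF r] by simp
  ultimately have "even (phi (a i) - phi E)" by simp
  then show ?thesis using ea oE by simp
qed

lemma mul0r: "(M::int^2^2) ** 0 = 0" by (simp add: meq2 mm2)
lemma mul0l: "0 ** (M::int^2^2) = 0" by (simp add: meq2 mm2)

definition Eu :: "2 \<Rightarrow> 2 \<Rightarrow> int^2^2" where "Eu r s = (\<chi> a b. if a = r \<and> b = s then 1 else 0)"

lemma Eu_extract: "mat (t$p$q) = Eu 1 p ** t ** Eu q 1 + Eu 2 p ** t ** Eu q 2"
  using exhaust_2[of p] exhaust_2[of q] by (auto simp: meq2 mm2 mat2 Eu_def)

lemma mat_mult_mat: "mat m ** mat n = (mat (m*n) :: int^2^2)" by (simp add: meq2 mm2 mat2)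

definition JJ :: "(nat \<Rightarrow> int^2^2) \<Rightarrow> (nat \<Rightarrow> int^2^2) \<Rightarrow> nat \<Rightarrow> nat \<Rightarrow> int^2^2 \<Rightarrow> bool" where
 "JJ x y i j t \<longleftrightarrow> (\<exists>a\<in>tuple_alg_gen {x,y}. a i = 0 \<and> a j = t)"

definition SS where "SS x y i j n \<longleftrightarrow> JJ x y i j (mat n)"

definition spanat :: "(nat \<Rightarrow> int^2^2) \<Rightarrow> (nat \<Rightarrow> int^2^2) \<Rightarrow> nat \<Rightarrow> bool" where
 "spanat x y j \<longleftrightarrow> (\<forall>m. \<exists>c0 c1 c2 c3. m = lc c0 c1 c2 c3 (x j) (y j))"

lemma JJ_add: "JJ x y i j t \<Longrightarrow> JJ x y i j s \<Longrightarrow> JJ x y i j (t + s)"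
  unfolding JJ_def
proof (elim bexE conjE)
  fix a b assume "a \<in> tuple_alg_gen {x,y}" "a i = 0" "a j = t" "b \<in> tuple_alg_gen {x,y}" "b i = 0" "b j = s"
  then show "\<exists>a\<in>tuple_alg_gen {x, y}. a i = 0 \<and> a j = t + s"
    by (intro bexI[of _ "\<lambda>l. a l + b l"]) (auto intro: tuple_alg_gen.add)
qed

lemma JJ_lmul: "spanat x y j \<Longrightarrow> JJ x y i j t \<Longrightarrow> JJ x y i j (m ** t)"
  unfolding JJ_def spanat_def
proof (elim bexE conjE)
  fix a assume sp: "\<forall>m. \<exists>c0 c1 c2 c3. m = lc c0 c1 c2 c3 (x j) (y j)"
    and a: "a \<in> tuple_alg_gen {x,y}" "a i = 0" "a j = t"
  obtain c0 c1 c2 c3 where c: "m = lc c0 c1 c2 c3 (x j) (y j)" using sp by blast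
  show "\<exists>a\<in>tuple_alg_gen {x, y}. a i = 0 \<and> a j = m ** t"
    using a c by (intro bexI[of _ "\<lambda>l. lc c0 c1 c2 c3 (x l) (y l) ** a l"])
      (auto simp: mul0r intro: tuple_alg_gen.mult lc_in)
qed

lemma JJ_rmul: "spanat x y j \<Longrightarrow> JJ x y i j t \<Longrightarrow> JJ x y i j (t ** m)"
  unfolding JJ_def spanat_def
proof (elim bexE conjE)
  fix a assume sp: "\<forall>m. \<exists>c0 c1 c2 c3. m = lc c0 c1 c2 c3 (x j) (y j)"
    and a: "a \<in> tuple_alg_gen {x,y}" "a i = 0" "a j = t"
  obtain c0 c1 c2 c3 where c: "m = lc c0 c1 c2 c3 (x j) (y j)" using sp by blast
  show "\<exists>a\<in>tuple_alg_gen {x, y}. a i = 0 \<and> a j = t ** m"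
    using a c by (intro bexI[of _ "\<lambda>l. a l ** lc c0 c1 c2 c3 (x l) (y l)"])
      (auto simp: mul0l intro: tuple_alg_gen.mult lc_in)
qed

lemma SS_entry: "spanat x y j \<Longrightarrow> JJ x y i j t \<Longrightarrow> SS x y i j (t$p$q)"
  unfolding SS_def Eu_extract by (intro JJ_add JJ_lmul JJ_rmul)

lemma SS_add: "SS x y i j m \<Longrightarrow> SS x y i j n \<Longrightarrow> SS x y i j (m + n)"
proof -
  have "mat (m+n) = (mat m + mat n :: int^2^2)" by (simp add: meq2 mat2)
  then show "SS x y i j m \<Longrightarrow> SS x y i j n \<Longrightarrow> SS x y i j (m + n)" unfolding SS_def by (simp add: JJ_add)
qed

lemma SS_mul: "spanat x y j \<Longrightarrow> SS x y i j n \<Longrightarrow> SS x y i j (m * n)"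
  unfolding SS_def mat_mult_mat[symmetric] by (rule JJ_lmul)

lemma ideal_extract:
  assumes add: "\<And>m n. S m \<Longrightarrow> S n \<Longrightarrow> S (m+n)" and mul: "\<And>m n. S n \<Longrightarrow> S (m*n)"
    and ns: "\<not> (x12 = 0 \<and> x21 = 0 \<and> x11 = x22)"
    and z: "x11 \<in> {0,1}" "x12 \<in> {0,1}" "x21 \<in> {0,1}" "x22 \<in> {0,1::int}"
    and s: "S (al*x12)" "S (al*x21)" "S (al*x11 - be)" "S (al*x22 - be)"
  shows "S al \<and> S be"
proof -
  have Sa: "S al"
  proof (cases "x12 = 1")
    case True then show ?thesis using s(1) by simp
  next
    case False
    show ?thesis
    proof (cases "x21 = 1")
      case True then show ?thesis using s(2) by simp
    next
      case False2: False
      have d: "x11 - x22 = 1 \<or> x11 - x22 = -1" using ns z False False2 by auto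
      have "S ((al*x11 - be) + (-1) * (al*x22 - be))" using add[OF s(3) mul[OF s(4)]] .
      hence "S ((x11 - x22) * ((al*x11 - be) + (-1) * (al*x22 - be)))" by (rule mul)
      moreover have "(x11 - x22) * ((al*x11 - be) + (-1) * (al*x22 - be)) = al"
        using d by (auto simp: algebra_simps)
      ultimately show ?thesis by simp
    qed
  qed
  have "S (x11 * al + (-1) * (al*x11 - be))" using add[OF mul[OF Sa] mul[OF s(3)]] .
  moreover have "x11 * al + (-1) * (al*x11 - be) = be" by (simp add: algebra_simps)
  ultimately show ?thesis using Sa by simp
qed

lemma nonscalar:
  assumes "D3 X Y \<noteq> 0"
  shows "\<not> (X$1$2 = 0 \<and> X$2$1 = 0 \<and> X$1$1 = X$2$2)" "\<not> (Y$1$2 = 0 \<and> Y$2$1 = 0 \<and> Y$1$1 = Y$2$2)"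
  using assms by (auto simp: D3_def det3c_def vv1_def)

lemma CH_X: "X ** X = lc (- dt2 X) (tr2 X) 0 0 X Y"
  by (simp add: meq2 mm2 lc_ent tr2_def dt2_def algebra_simps)
lemma CH_Y: "Y ** Y = lc (- dt2 Y) 0 (tr2 Y) 0 X Y"
  by (simp add: meq2 mm2 lc_ent tr2_def dt2_def algebra_simps)
lemma CH_YX: "Y ** X = lc (tr2 (X**Y) - tr2 X * tr2 Y) (tr2 Y) (tr2 X) (-1) X Y"
  by (simp add: meq2 mm2 lc_ent tr2_def dt2_def algebra_simps)

lemma SfX:
  assumes sp: "spanat x y j" and D: "D3 (x j) (y j) \<noteq> 0" and zx: "zo (x j)"
  shows "SS x y i j (tr2 (x j) - tr2 (x i)) \<and> SS x y i j (dt2 (x j) - dt2 (x i))"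
proof -
  let ?a = "\<lambda>l. x l ** x l - lc (- dt2 (x i)) (tr2 (x i)) 0 0 (x l) (y l)"
  have aA: "?a \<in> tuple_alg_gen {x,y}" by (intro tg_diff tuple_alg_gen.mult tuple_alg_gen.gen lc_in) auto
  have ai: "?a i = 0" using CH_X[of "x i" "y i"] by simp
  define t where "t = ?a j"
  have J: "JJ x y i j t" unfolding JJ_def t_def by (rule bexI[OF _ aA]) (simp add: ai)
  have t: "t = lc (- dt2 (x j)) (tr2 (x j)) 0 0 (x j) (y j) - lc (- dt2 (x i)) (tr2 (x i)) 0 0 (x j) (y j)"
    unfolding t_def using CH_X[of "x j" "y j"] by simp
  have e: "t$1$2 = (tr2 (x j) - tr2 (x i)) * (x j)$1$2" "t$2$1 = (tr2 (x j) - tr2 (x i)) * (x j)$2$1"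
    "t$1$1 = (tr2 (x j) - tr2 (x i)) * (x j)$1$1 - (dt2 (x j) - dt2 (x i))"
    "t$2$2 = (tr2 (x j) - tr2 (x i)) * (x j)$2$2 - (dt2 (x j) - dt2 (x i))"
    unfolding t by (simp_all add: lc_ent algebra_simps)
  show ?thesis
    by (rule ideal_extract[where S="SS x y i j", OF SS_add SS_mul[OF sp] nonscalar(1)[OF D] zo_ent[OF zx]
        SS_entry[OF sp J, where p=1 and q=2, unfolded e(1)] SS_entry[OF sp J, where p=2 and q=1, unfolded e(2)]
        SS_entry[OF sp J, where p=1 and q=1, unfolded e(3)] SS_entry[OF sp J, where p=2 and q=2, unfolded e(4)]])
qed

lemma SfY:
  assumes sp: "spanat x y j" and D: "D3 (x j) (y j) \<noteq> 0" and zy: "zo (y j)"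
  shows "SS x y i j (tr2 (y j) - tr2 (y i)) \<and> SS x y i j (dt2 (y j) - dt2 (y i))"
proof -
  let ?a = "\<lambda>l. y l ** y l - lc (- dt2 (y i)) 0 (tr2 (y i)) 0 (x l) (y l)"
  have aA: "?a \<in> tuple_alg_gen {x,y}" by (intro tg_diff tuple_alg_gen.mult tuple_alg_gen.gen lc_in) auto
  have ai: "?a i = 0" using CH_Y[of "y i" "x i"] by simp
  define t where "t = ?a j"
  have J: "JJ x y i j t" unfolding JJ_def t_def by (rule bexI[OF _ aA]) (simp add: ai)
  have t: "t = lc (- dt2 (y j)) 0 (tr2 (y j)) 0 (x j) (y j) - lc (- dt2 (y i)) 0 (tr2 (y i)) 0 (x j) (y j)"
    unfolding t_def using CH_Y[of "y j" "x j"] by simp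
  have e: "t$1$2 = (tr2 (y j) - tr2 (y i)) * (y j)$1$2" "t$2$1 = (tr2 (y j) - tr2 (y i)) * (y j)$2$1"
    "t$1$1 = (tr2 (y j) - tr2 (y i)) * (y j)$1$1 - (dt2 (y j) - dt2 (y i))"
    "t$2$2 = (tr2 (y j) - tr2 (y i)) * (y j)$2$2 - (dt2 (y j) - dt2 (y i))"
    unfolding t by (simp_all add: lc_ent algebra_simps)
  show ?thesis
    by (rule ideal_extract[where S="SS x y i j", OF SS_add SS_mul[OF sp] nonscalar(2)[OF D] zo_ent[OF zy]
        SS_entry[OF sp J, where p=1 and q=2, unfolded e(1)] SS_entry[OF sp J, where p=2 and q=1, unfolded e(2)]
        SS_entry[OF sp J, where p=1 and q=1, unfolded e(3)] SS_entry[OF sp J, where p=2 and q=2, unfolded e(4)]])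
qed

lemma SfXY:
  assumes sp: "spanat x y j" and eq: "tr2 (x j) = tr2 (x i)" "tr2 (y j) = tr2 (y i)"
  shows "SS x y i j (tr2 (x j ** y j) - tr2 (x i ** y i))"
proof -
  let ?a = "\<lambda>l. y l ** x l - lc (tr2 (x i ** y i) - tr2 (x i) * tr2 (y i)) (tr2 (y i)) (tr2 (x i)) (-1) (x l) (y l)"
  have aA: "?a \<in> tuple_alg_gen {x,y}" by (intro tg_diff tuple_alg_gen.mult tuple_alg_gen.gen lc_in) auto
  have ai: "?a i = 0" using CH_YX[of "y i" "x i"] by simp
  define t where "t = ?a j"
  have J: "JJ x y i j t" unfolding JJ_def t_def by (rule bexI[OF _ aA]) (simp add: ai)
  have t: "t = lc (tr2 (x j ** y j) - tr2 (x j) * tr2 (y j)) (tr2 (y j)) (tr2 (x j)) (-1) (x j) (y j)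
     - lc (tr2 (x i ** y i) - tr2 (x i) * tr2 (y i)) (tr2 (y i)) (tr2 (x i)) (-1) (x j) (y j)"
    unfolding t_def using CH_YX[of "y j" "x j"] by simp
  have e: "t$1$1 = tr2 (x j ** y j) - tr2 (x i ** y i)"
    unfolding t using eq by (simp add: lc_ent algebra_simps)
  show ?thesis using SS_entry[OF sp J, where p=1 and q=1] unfolding e .
qed

lemma four: "spanat x y j \<Longrightarrow> SS x y i j r \<Longrightarrow> r \<in> {-4,-2,-1,1,2,4} \<Longrightarrow> SS x y i j 4"
  using SS_mul[of x y j i r "4 div r"] by auto

lemma rA: "(a::int) \<in> {0,1,2} \<Longrightarrow> b \<in> {0,1,2} \<Longrightarrow> b - a \<noteq> 0 \<Longrightarrow> b - a \<in> {-4,-2,-1,1,2,4}" by auto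
lemma rB: "(a::int) \<in> {-1,0,1} \<Longrightarrow> b \<in> {-1,0,1} \<Longrightarrow> b - a \<noteq> 0 \<Longrightarrow> b - a \<in> {-4,-2,-1,1,2,4}" by auto
lemma rC: "(a::int) \<in> {0,1,2,3,4} \<Longrightarrow> b \<in> {0,1,2,3,4} \<Longrightarrow> b - a \<noteq> 0 \<Longrightarrow> b - a \<noteq> 3 \<and> b - a \<noteq> -3 \<Longrightarrow> b - a \<in> {-4,-2,-1,1,2,4}" by auto

lemma pair_core:
  assumes spi: "spanat x y i" and spj: "spanat x y j"
    and zi: "zo (x i)" "zo (y i)" and zj: "zo (x j)" "zo (y j)"
    and Di: "D3 (x i) (y i) = 1 \<or> D3 (x i) (y i) = -1" and Dj: "D3 (x j) (y j) = 1 \<or> D3 (x j) (y j) = -1"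
    and s: "SS x y i j s" "odd s"
    and neq: "\<not> (tr2 (x i) = tr2 (x j) \<and> dt2 (x i) = dt2 (x j) \<and> tr2 (y i) = tr2 (y j) \<and> dt2 (y i) = dt2 (y j)
               \<and> tr2 (x i ** y i) = tr2 (x j ** y j))"
  shows "\<exists>e\<in>tuple_alg_gen {x,y}. e i = mat 1 \<and> e j = 0"
proof -
  have Dj0: "D3 (x j) (y j) \<noteq> 0" using Dj by auto
  note fx = SfX[OF spj Dj0 zj(1), of i] and fy = SfY[OF spj Dj0 zj(2), of i]
  have ri: "tr2 (x i) \<in> {0,1,2}" "dt2 (x i) \<in> {-1,0,1}" "tr2 (x i ** y i) \<in> {0,1,2,3,4}"
     "tr2 (y i) \<in> {0,1,2}" "dt2 (y i) \<in> {-1,0,1}"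
     by (fact rng[OF zi, THEN conjunct1] rng[OF zi, THEN conjunct2, THEN conjunct1] rng[OF zi, THEN conjunct2, THEN conjunct2]
       rng[OF zi(2) zi(1), THEN conjunct1] rng[OF zi(2) zi(1), THEN conjunct2, THEN conjunct1])+
  have rj: "tr2 (x j) \<in> {0,1,2}" "dt2 (x j) \<in> {-1,0,1}" "tr2 (x j ** y j) \<in> {0,1,2,3,4}"
     "tr2 (y j) \<in> {0,1,2}" "dt2 (y j) \<in> {-1,0,1}"
     by (fact rng[OF zj, THEN conjunct1] rng[OF zj, THEN conjunct2, THEN conjunct1] rng[OF zj, THEN conjunct2, THEN conjunct2]
       rng[OF zj(2) zj(1), THEN conjunct1] rng[OF zj(2) zj(1), THEN conjunct2, THEN conjunct1])+
  have S4: "SS x y i j 4"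
  proof (cases "tr2 (x j) - tr2 (x i) \<noteq> 0")
    case True then show ?thesis using fx rA[OF ri(1) rj(1)] by (intro four[OF spj, of _ "tr2 (x j) - tr2 (x i)"]) auto
  next
    case F1: False
    show ?thesis
    proof (cases "dt2 (x j) - dt2 (x i) \<noteq> 0")
      case True then show ?thesis using fx rB[OF ri(2) rj(2)] by (intro four[OF spj, of _ "dt2 (x j) - dt2 (x i)"]) auto
    next
      case F2: False
      show ?thesis
      proof (cases "tr2 (y j) - tr2 (y i) \<noteq> 0")
        case True then show ?thesis using fy rA[OF ri(4) rj(4)] by (intro four[OF spj, of _ "tr2 (y j) - tr2 (y i)"]) auto
      next
        case F3: False
        show ?thesis
        proof (cases "dt2 (y j) - dt2 (y i) \<noteq> 0")
          case True then show ?thesis using fy rB[OF ri(5) rj(5)] by (intro four[OF spj, of _ "dt2 (y j) - dt2 (y i)"]) auto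
        next
          case F4: False
          have sxy: "SS x y i j (tr2 (x j ** y j) - tr2 (x i ** y i))" using SfXY[OF spj] F1 F3 by simp
          have nz: "tr2 (x j ** y j) - tr2 (x i ** y i) \<noteq> 0" using neq F1 F2 F3 F4 by auto
          have Fi: "FF (tr2 (x i)) (dt2 (x i)) (tr2 (y i)) (dt2 (y i)) (tr2 (x i ** y i)) = 1 \<or>
                    FF (tr2 (x i)) (dt2 (x i)) (tr2 (y i)) (dt2 (y i)) (tr2 (x i ** y i)) = -1"
            using Di unfolding D3_FF .
          have Fj: "FF (tr2 (x i)) (dt2 (x i)) (tr2 (y i)) (dt2 (y i)) (tr2 (x j ** y j)) = 1 \<or>
                    FF (tr2 (x i)) (dt2 (x i)) (tr2 (y i)) (dt2 (y i)) (tr2 (x j ** y j)) = -1"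
            using Dj F1 F2 F3 F4 unfolding D3_FF by simp
          have n3: "tr2 (x j ** y j) - tr2 (x i ** y i) \<noteq> 3 \<and> tr2 (x j ** y j) - tr2 (x i ** y i) \<noteq> -3"
            by (rule FF_raw[rule_format, OF ri(1) ri(2) ri(4) ri(5) ri(3) rj(3) Fi Fj])
          show ?thesis using sxy rC[OF ri(3) rj(3) nz n3] by (intro four[OF spj, of _ "tr2 (x j ** y j) - tr2 (x i ** y i)"]) auto
        qed
      qed
    qed
  qed
  have "s mod 4 = s + (- (s div 4)) * 4" by (simp add: algebra_simps minus_div_mult_eq_mod[symmetric])
  moreover have "SS x y i j (s + (- (s div 4)) * 4)" using SS_add[OF s(1) SS_mul[OF spj S4]] .
  ultimately have sm: "SS x y i j (s mod 4)" by simp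
  have "s mod 4 = 1 \<or> s mod 4 = 3" using s(2) unfolding even_iff_mod_2_eq_zero by presburger
  then have S1: "SS x y i j 1"
  proof
    assume "s mod 4 = 1" then show ?thesis using sm by simp
  next
    assume "s mod 4 = 3"
    then have "SS x y i j (4 + (-1) * 3)" using SS_add[OF S4 SS_mul[OF spj sm, of "-1"]] by simp
    then show ?thesis by simp
  qed
  then obtain a where a: "a \<in> tuple_alg_gen {x,y}" "a i = 0" "a j = mat 1" unfolding SS_def JJ_def by blast
  show ?thesis
    by (rule bexI[of _ "\<lambda>l. mat 1 - a l"]) (use a in \<open>auto intro: tg_diff tuple_alg_gen.one\<close>)
qed

lemma pair_mod2:
  assumes g: "generates_M2_tuple k {red2 x, red2 y}" and ik: "i < k" "j < k" "i \<noteq> j"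
    and zi: "zo (x i)" "zo (y i)" and zj: "zo (x j)" "zo (y j)"
    and Di: "D3 (x i) (y i) = 1 \<or> D3 (x i) (y i) = -1" and Dj: "D3 (x j) (y j) = 1 \<or> D3 (x j) (y j) = -1"
    and spi: "spanat x y i" and spj: "spanat x y j"
  shows "\<exists>e\<in>tuple_alg_gen {x,y}. e i = mat 1 \<and> e j = 0"
proof -
  obtain a where a: "a \<in> tuple_alg_gen {x,y}" "\<forall>l<k. r2 (a l) = r2 (if l = i then mat 1 else 0)"
    using gen_elem[OF g, of "\<lambda>l. r2 (if l = i then mat 1 else 0)"] by blast
  have ai: "r2 (a i) = r2 (mat 1)" using a(2) ik by simp
  have aj: "r2 (a j) = r2 0" using a(2) ik by simp
  have ai_e: "even ((a i)$p$q - (mat 1 :: int^2^2)$p$q)" for p q using r2_eq_even[OF ai] .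
  have aj_e: "even ((a j)$p$q)" for p q using r2_eq_even[OF aj, of p q] by simp
  show ?thesis
  proof (cases "tr2 (x i) = tr2 (x j) \<and> dt2 (x i) = dt2 (x j) \<and> tr2 (y i) = tr2 (y j) \<and> dt2 (y i) = dt2 (y j)
               \<and> tr2 (x i ** y i) = tr2 (x j ** y j)")
    case True
    have "\<exists>c0 c1 c2 c3. a i = lc c0 c1 c2 c3 (x i) (y i) \<and> a j = lc c0 c1 c2 c3 (x j) (y j)"
      using True by (intro span2[OF _ _ _ _ _ a(1)]) auto
    then obtain c0 c1 c2 c3 where c: "a i = lc c0 c1 c2 c3 (x i) (y i)" "a j = lc c0 c1 c2 c3 (x j) (y j)" by blast
    have oD: "odd (D3 (x i) (y i))" using Di by auto
    have o: "odd c0 \<and> even c1 \<and> even c2 \<and> even c3"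
      by (rule indep_mod2[OF oD c(1)]) (use ai_e[of 1 1] ai_e[of 1 2] ai_e[of 2 1] ai_e[of 2 2] in \<open>simp_all add: mat2\<close>)
    have "(a j)$1$1 = c0 + c1 * (x j)$1$1 + c2 * (y j)$1$1 + c3 * (x j ** y j)$1$1" using c(2) by (simp add: lc_ent)
    then have "odd ((a j)$1$1)" using o by simp
    then show ?thesis using aj_e[of 1 1] by simp
  next
    case False
    define u :: "int^2^2" where "u = (\<chi> p q. ((a i)$p$q - (mat 1 :: int^2^2)$p$q) div 2)"
    have au: "a i = mat 1 + mat 2 ** u"
    proof -
      have "(mat 1 + mat 2 ** u) $ p $ q = (a i)$p$q" for p q
        using ai_e[of p q] unfolding u_def by (simp add: matscal)
      then show ?thesis by (simp add: meq2)
    qed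
    obtain d0 d1 d2 d3 where d: "u = lc d0 d1 d2 d3 (x i) (y i)" using spi unfolding spanat_def by blast
    let ?b = "\<lambda>l. a l - (mat 1 + mat 2 ** lc d0 d1 d2 d3 (x l) (y l))"
    have bA: "?b \<in> tuple_alg_gen {x,y}"
      by (rule tg_diff[OF a(1) tuple_alg_gen.add[OF tuple_alg_gen.one tuple_alg_gen.smult[OF lc_in]]]) auto
    have bi: "?b i = 0" using au d by simp
    have J: "JJ x y i j (?b j)" unfolding JJ_def by (rule bexI[OF _ bA]) (simp add: bi)
    have S: "SS x y i j ((?b j)$1$1)" by (rule SS_entry[OF spj J])
    have "(?b j)$1$1 = (a j)$1$1 - 1 - 2 * (lc d0 d1 d2 d3 (x j) (y j))$1$1" by (simp add: matscal mat2)
    then have "odd ((?b j)$1$1)" using aj_e[of 1 1] by (simp add: mat2 matscal)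
    then show ?thesis by (rule pair_core[OF spi spj zi zj Di Dj S _ False])
  qed
qed

lemma idem_fin:
  assumes "finite F"
  shows "(\<forall>j\<in>F. \<exists>e\<in>tuple_alg_gen {x,y}. e i = mat 1 \<and> e j = 0) \<Longrightarrow>
    \<exists>f\<in>tuple_alg_gen {x,y}. f i = mat 1 \<and> (\<forall>j\<in>F. f j = 0)"
  using assms
proof (induction F rule: finite_induct)
  case empty
  show ?case by (rule bexI[of _ "\<lambda>l. mat 1"]) (auto intro: tuple_alg_gen.one)
next
  case (insert j F)
  then obtain f where f: "f \<in> tuple_alg_gen {x,y}" "f i = mat 1" "\<forall>j\<in>F. f j = 0" by blast
  obtain e where e: "e \<in> tuple_alg_gen {x,y}" "e i = mat 1" "e j = 0" using insert.prems by blast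
  have A: "(\<lambda>l. f l ** e l) \<in> tuple_alg_gen {x,y}" by (rule tuple_alg_gen.mult[OF f(1) e(1)])
  show ?case
    by (rule bexI[OF _ A]) (use f e in \<open>auto simp: mul0r mul0l\<close>)
qed

lemma core:
  assumes sp: "\<forall>i<k. spanat x y i"
    and sep: "\<forall>i<k. \<forall>j<k. i \<noteq> j \<longrightarrow> (\<exists>e\<in>tuple_alg_gen {x,y}. e i = mat 1 \<and> e j = 0)"
  shows "generates_M2_tuple k {x,y}"
  unfolding generates_M2_tuple_def
proof
  fix z :: "nat \<Rightarrow> int^2^2"
  have "n \<le> k \<Longrightarrow> \<exists>w\<in>tuple_alg_gen {x,y}. \<forall>l<n. w l = z l" for n
  proof (induction n)
    case 0 show ?case by (rule bexI[of _ "\<lambda>l. 0"]) (auto intro: tuple_alg_gen.zero)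
  next
    case (Suc n)
    have "n \<le> k" using Suc.prems by simp
    then obtain w where w: "w \<in> tuple_alg_gen {x,y}" "\<forall>l<n. w l = z l" using Suc.IH by blast
    have nk: "n < k" using Suc.prems by simp
    have "\<forall>j\<in>{j. j<k \<and> j\<noteq>n}. \<exists>e\<in>tuple_alg_gen {x,y}. e n = mat 1 \<and> e j = 0"
    proof
      fix j assume "j \<in> {j. j<k \<and> j\<noteq>n}"
      then have jk: "j < k" and jn: "n \<noteq> j" by auto
      show "\<exists>e\<in>tuple_alg_gen {x,y}. e n = mat 1 \<and> e j = 0" by (rule sep[rule_format, OF nk jk jn])
    qed
    then obtain f where f: "f \<in> tuple_alg_gen {x,y}" "f n = mat 1" "\<forall>j\<in>{j. j<k \<and> j\<noteq>n}. f j = 0"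
      using idem_fin[of "{j. j<k \<and> j\<noteq>n}" x y n] by force
    have "spanat x y n" using sp nk by blast
    then obtain c0 c1 c2 c3 where c: "z n = lc c0 c1 c2 c3 (x n) (y n)" unfolding spanat_def by blast
    let ?w = "\<lambda>l. w l + f l ** (lc c0 c1 c2 c3 (x l) (y l) - w l)"
    have wA: "?w \<in> tuple_alg_gen {x,y}"
      by (rule tuple_alg_gen.add[OF w(1) tuple_alg_gen.mult[OF f(1) tg_diff[OF lc_in w(1)]]]) auto
    have "\<forall>l<Suc n. ?w l = z l"
    proof (intro allI impI)
      fix l assume l: "l < Suc n"
      show "?w l = z l"
      proof (cases "l = n")
        case True then show ?thesis using f(2) c by simp
      next
        case False
        then have "f l = 0" using f(3) l nk by auto
        then show ?thesis using w(2) l False by (simp add: mul0l)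
      qed
    qed
    then show ?case by (rule bexI[OF _ wA])
  qed
  from this[OF order_refl] show "\<exists>w\<in>tuple_alg_gen {x,y}. \<forall>i<k. w i = z i" .
qed

lemma part1:
  assumes "(\<forall>i<k. \<forall>a b. x i $ a $ b \<in> {0, 1} \<and> y i $ a $ b \<in> {0, 1})"
    and g: "generates_M2_tuple k {red2 x, red2 y}"
  shows "generates_M2_tuple k {x, y}"
proof -
  have z: "zo (x i) \<and> zo (y i)" if "i < k" for i using assms(1) that unfolding zo_def by auto
  have D: "D3 (x i) (y i) = 1 \<or> D3 (x i) (y i) = -1" if "i < k" for i
    using D3_unit[OF g that] z[OF that] by blast
  have sp: "spanat x y i" if "i < k" for i unfolding spanat_def using spanning[OF D[OF that]] by blast
  show ?thesis
  proof (rule core)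
    show "\<forall>i<k. spanat x y i" using sp by blast
    show "\<forall>i<k. \<forall>j<k. i \<noteq> j \<longrightarrow> (\<exists>e\<in>tuple_alg_gen {x,y}. e i = mat 1 \<and> e j = 0)"
    proof (intro allI impI)
      fix i j assume "i < k" "j < k" "i \<noteq> j"
      then show "\<exists>e\<in>tuple_alg_gen {x,y}. e i = mat 1 \<and> e j = 0"
        using z D sp by (intro pair_mod2[OF g]) auto
    qed
  qed
qed

definition mk :: "int \<Rightarrow> int \<Rightarrow> int \<Rightarrow> int \<Rightarrow> int^2^2" where "mk a b c d = vector [vector [a,b], vector [c,d]]"
lemma mk_ent [simp]: "mk a b c d $1$1 = a" "mk a b c d $1$2 = b" "mk a b c d $2$1 = c" "mk a b c d $2$2 = d"
  by (simp_all add: mk_def)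

definition xa :: "int list" where "xa = [0, 0, 0, 0, 0, 0, 0, 0, 0, 0, 0, 0, 0, 0, 0, 0]"
definition xb :: "int list" where "xb = [0, 0, 0, 0, 0, 0, 0, 0, 1, 1, 1, 1, 1, 1, 1, 1]"
definition xc :: "int list" where "xc = [0, 0, 0, 0, 1, 1, 1, 1, 1, 1, 1, 1, 1, 1, 1, 1]"
definition xd :: "int list" where "xd = [1, 1, 1, 1, 0, 0, 0, 0, 0, 0, 0, 0, 1, 1, 1, 1]"
definition ya :: "int list" where "ya = [0, 0, 1, 1, 0, 0, 0, 0, 0, 0, 0, 1, 0, 0, 0, 0]"
definition yb :: "int list" where "yb = [1, 1, 1, 1, 1, 1, 1, 1, 0, 0, 1, 0, 0, 0, 0, 1]"
definition yc :: "int list" where "yc = [1, 1, 1, 1, 0, 0, 1, 1, 0, 1, 1, 1, 0, 1, 1, 1]"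
definition yd :: "int list" where "yd = [0, 1, 0, 1, 0, 1, 0, 1, 1, 0, 1, 1, 1, 0, 1, 0]"
definition tab16 :: "(int \<times> int \<times> int \<times> int \<times> int) list" where
 "tab16 = [(1,0,0,(-1),0), (1,0,1,(-1),1), (1,0,1,(-1),0), (1,0,2,0,1), (0,0,0,0,1), (0,0,1,0,1), (0,0,0,(-1),1), (0,0,1,(-1),1), (0,(-1),1,0,0), (0,(-1),0,0,1), (0,(-1),1,(-1),2), (0,(-1),2,1,1), (1,(-1),1,0,1), (1,(-1),0,0,1), (1,(-1),1,0,2), (1,(-1),0,(-1),2)]"

definition x16 :: "nat \<Rightarrow> int^2^2" where "x16 l = (if l < 16 then mk (xa!l) (xb!l) (xc!l) (xd!l) else 0)"
definition y16 :: "nat \<Rightarrow> int^2^2" where "y16 l = (if l < 16 then mk (ya!l) (yb!l) (yc!l) (yd!l) else 0)"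

definition inv5 :: "int^2^2 \<Rightarrow> int^2^2 \<Rightarrow> int \<times> int \<times> int \<times> int \<times> int" where
  "inv5 X Y = (tr2 X, dt2 X, tr2 Y, dt2 Y, tr2 (X**Y))"

lemma zo_iff: "zo X \<longleftrightarrow> X$1$1 \<in> {0,1} \<and> X$1$2 \<in> {0,1} \<and> X$2$1 \<in> {0,1} \<and> X$2$2 \<in> {0,1}"
  unfolding zo_def by (simp add: forall_2)

lemma raw16: "\<forall>l\<in>set [0..<16]. xa!l \<in> {0,1} \<and> xb!l \<in> {0,1} \<and> xc!l \<in> {0,1} \<and> xd!l \<in> {0,1} \<and>
   ya!l \<in> {0,1} \<and> yb!l \<in> {0,1} \<and> yc!l \<in> {0,1} \<and> yd!l \<in> {0,1}"
  unfolding xa_def xb_def xc_def xd_def ya_def yb_def yc_def yd_def by code_simp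

lemma raw16b: "\<forall>l\<in>set [0..<16]. (xa!l + xd!l, xa!l*xd!l - xb!l*xc!l, ya!l + yd!l, ya!l*yd!l - yb!l*yc!l,
    (xa!l*ya!l + xb!l*yc!l) + (xc!l*yb!l + xd!l*yd!l)) = tab16 ! l"
  unfolding xa_def xb_def xc_def xd_def ya_def yb_def yc_def yd_def tab16_def by code_simp

lemma facts16: "l < 16 \<Longrightarrow> zo (x16 l) \<and> zo (y16 l) \<and> inv5 (x16 l) (y16 l) = tab16 ! l"
proof -
  assume l: "l < 16"
  then have "l \<in> set [0..<16]" by simp
  note r = raw16[rule_format, OF this] and rb = raw16b[rule_format, OF this]
  have e: "x16 l = mk (xa!l) (xb!l) (xc!l) (xd!l)" "y16 l = mk (ya!l) (yb!l) (yc!l) (yd!l)"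
    using l by (simp_all add: x16_def y16_def)
  have z: "zo (x16 l) \<and> zo (y16 l)" unfolding e zo_iff mk_ent using r by blast
  have "inv5 (x16 l) (y16 l) = (xa!l + xd!l, xa!l*xd!l - xb!l*xc!l, ya!l + yd!l, ya!l*yd!l - yb!l*yc!l,
    (xa!l*ya!l + xb!l*yc!l) + (xc!l*yb!l + xd!l*yd!l))" unfolding e inv5_def tr2_def dt2_def mm2 mk_ent ..
  then show ?thesis using z rb by simp
qed

definition clq :: "int \<times> int \<times> int \<times> int \<times> int \<Rightarrow> int \<times> int \<times> int \<times> int \<times> int \<Rightarrow> bool" where
 "clq p q \<longleftrightarrow> (case p of (a1,b1,c1,d1,e1) \<Rightarrow> case q of (a2,b2,c2,d2,e2) \<Rightarrow>
    odd (a2 - a1) \<or> odd (b2 - b1) \<or> odd (c2 - c1) \<or> odd (d2 - d1) \<or> (a2 = a1 \<and> c2 = c1 \<and> odd (e2 - e1)))"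

definition fft :: "int \<times> int \<times> int \<times> int \<times> int \<Rightarrow> int" where
 "fft p = (case p of (a,b,c,d,e) \<Rightarrow> FF a b c d e)"

lemma clq16: "\<forall>i\<in>set [0..<16]. \<forall>j\<in>set [0..<16]. i \<noteq> j \<longrightarrow> clq (tab16 ! i) (tab16 ! j)"
  by code_simp

lemma ff16: "\<forall>i\<in>set [0..<16]. fft (tab16 ! i) = 1 \<or> fft (tab16 ! i) = -1"
  by code_simp


lemma part2: "generates_M2_tuple 16 {x16, y16}"
proof -
  have F: "zo (x16 l) \<and> zo (y16 l) \<and> inv5 (x16 l) (y16 l) = tab16 ! l" if "l < 16" for l
    using facts16[OF that] .
  have D: "D3 (x16 l) (y16 l) = 1 \<or> D3 (x16 l) (y16 l) = -1" if "l < 16" for l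
  proof -
    have "fft (inv5 (x16 l) (y16 l)) = D3 (x16 l) (y16 l)" by (simp add: fft_def inv5_def D3_FF)
    moreover have "l \<in> set [0..<16]" using that by simp
    ultimately show ?thesis using ff16 F[OF that] by metis
  qed
  have sp: "spanat x16 y16 l" if "l < 16" for l unfolding spanat_def using spanning[OF D[OF that]] by blast
  show ?thesis
  proof (rule core)
    show "\<forall>i<16. spanat x16 y16 i" using sp by blast
    show "\<forall>i<16. \<forall>j<16. i \<noteq> j \<longrightarrow> (\<exists>e\<in>tuple_alg_gen {x16,y16}. e i = mat 1 \<and> e j = 0)"
    proof (intro allI impI)
      fix i j :: nat assume ij: "i < 16" "j < 16" "i \<noteq> j"
      have "i \<in> set [0..<16]" "j \<in> set [0..<16]" using ij by simp_all
      then have "clq (tab16 ! i) (tab16 ! j)" using clq16 ij(3) by blast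
      then have "clq (inv5 (x16 i) (y16 i)) (inv5 (x16 j) (y16 j))" using F[OF ij(1)] F[OF ij(2)] by simp
      then have c: "odd (tr2 (x16 j) - tr2 (x16 i)) \<or> odd (dt2 (x16 j) - dt2 (x16 i)) \<or>
          odd (tr2 (y16 j) - tr2 (y16 i)) \<or> odd (dt2 (y16 j) - dt2 (y16 i)) \<or>
          (tr2 (x16 j) = tr2 (x16 i) \<and> tr2 (y16 j) = tr2 (y16 i) \<and> odd (tr2 (x16 j ** y16 j) - tr2 (x16 i ** y16 i)))"
        unfolding clq_def inv5_def by simp
      have Dj0: "D3 (x16 j) (y16 j) \<noteq> 0" using D[OF ij(2)] by auto
      have zj: "zo (x16 j)" "zo (y16 j)" and zi: "zo (x16 i)" "zo (y16 i)" using F[OF ij(1)] F[OF ij(2)] by auto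
      note fx = SfX[OF sp[OF ij(2)] Dj0 zj(1), of i] and fy = SfY[OF sp[OF ij(2)] Dj0 zj(2), of i]
      have "\<exists>s. SS x16 y16 i j s \<and> odd s"
        using c fx fy SfXY[OF sp[OF ij(2)]] by blast
      then obtain s where s: "SS x16 y16 i j s" "odd s" by blast
      have neq: "\<not> (tr2 (x16 i) = tr2 (x16 j) \<and> dt2 (x16 i) = dt2 (x16 j) \<and> tr2 (y16 i) = tr2 (y16 j) \<and> dt2 (y16 i) = dt2 (y16 j)
               \<and> tr2 (x16 i ** y16 i) = tr2 (x16 j ** y16 j))"
        using c by auto
      show "\<exists>e\<in>tuple_alg_gen {x16,y16}. e i = mat 1 \<and> e j = 0"
        by (rule pair_core[OF sp[OF ij(1)] sp[OF ij(2)] zi zj D[OF ij(1)] D[OF ij(2)] s neq])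
    qed
  qed
qed

theorem mainTheorem19:
  shows "(\<forall>(k::nat) (x::nat \<Rightarrow> int^2^2) (y::nat \<Rightarrow> int^2^2).
            k \<ge> 1 \<longrightarrow>
            (\<forall>i<k. \<forall>a b. x i $ a $ b \<in> {0, 1} \<and> y i $ a $ b \<in> {0, 1}) \<longrightarrow>
            generates_M2_tuple k {red2 x, red2 y} \<longrightarrow>
            generates_M2_tuple k {x, y})
       \<and> (\<exists>x y :: nat \<Rightarrow> int^2^2. generates_M2_tuple 16 {x, y})"
  proof
  show "\<forall>(k::nat) (x::nat \<Rightarrow> int^2^2) (y::nat \<Rightarrow> int^2^2).
            k \<ge> 1 \<longrightarrow>
            (\<forall>i<k. \<forall>a b. x i $ a $ b \<in> {0, 1} \<and> y i $ a $ b \<in> {0, 1}) \<longrightarrow>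
            generates_M2_tuple k {red2 x, red2 y} \<longrightarrow>
            generates_M2_tuple k {x, y}"
    by (intro allI impI, rule part1)
  show "\<exists>x y :: nat \<Rightarrow> int^2^2. generates_M2_tuple 16 {x, y}"
    by (rule exI[of _ x16], rule exI[of _ y16], rule part2)
qed

end
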